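(* Let $G$ be a group satisfying the property $\mathsf{FM}$ and $\nu$ a conjugation-invariant pseudo-norm on $G$. For any elements $g_1,\dots,g_k\in G$ and real numbers $\lambda,s_1,\dots,s_k$, \[ \lim_{n\to\infty}\frac1n\,\nu\big(g_1^{[\lambda s_1n]}\cdots g_k^{[\lambda s_kn]}\big)=|\lambda|\lim_{n\to\infty}\frac1n\,\nu\big(g_1^{[s_1n]}\cdots g_k^{[s_kn]}\big), \] where $[\cdot]$ denotes the integer part.
   Context: A conjugation-invariant pseudo-norm on a group $G$ is a function $\nu\colon G\to\mathbb{R}_{\ge0}$ with $\nu(1)=0$, $\nu(f)=\nu(f^{-1})$, $\nu(fg)\le\nu(f)+\nu(g)$ and $\nu(gfg^{-1})=\nu(f)$ for all $f,g\in G$. Property $\mathsf{FM}$: for a subgroup $H\le G$, let $\nu_H(f)$ be the minimal $k$ such that $f=g_1h_1g_1^{-1}\cdots g_kh_kg_k^{-1}$ ($g_i\in G,h_i\in H$), $\infty$ if none; for $K\subset G$ let $\mathrm{D}^f_H(K)$ be the set of $h_0\in G$ such that for all $g_1,\dots,g_k\in G$ there is $h\in G$ with every element of $hh_0h^{-1}K(hh_0h^{-1})^{-1}$ commuting with every element of $\bigcup_i g_iHg_i^{-1}$. $(G,H)$ satisfies $\mathsf{FM}$ if $\nu_H<\infty$ on $G$ and $\mathrm{D}^f_H(h_1Hh_1^{-1}\cup\dots\cup h_kHh_k^{-1})\ne\emptyset$ for all $h_1,\dots,h_k\in G$; $G$ satisfies $\mathsf{FM}$ if some $(G,H)$ does.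 *)

theory Defs
  imports "HOL-Algebra.Algebra" "HOL-Library.Extended_Nat" Complex_Main
begin

definition gprod :: "('a, 'b) monoid_scheme \<Rightarrow> 'a list \<Rightarrow> 'a" where
  "gprod G xs = foldr (\<lambda>x acc. x \<otimes>\<^bsub>G\<^esub> acc) xs \<one>\<^bsub>G\<^esub>"

definition conj_inv_pseudo_norm :: "('a, 'b) monoid_scheme \<Rightarrow> ('a \<Rightarrow> real) \<Rightarrow> bool" where
  "conj_inv_pseudo_norm G \<nu> \<longleftrightarrow>
     \<nu> \<one>\<^bsub>G\<^esub> = 0 \<and>
     (\<forall>f\<in>carrier G. \<nu> f \<ge> 0) \<and>
     (\<forall>f\<in>carrier G. \<nu> (inv\<^bsub>G\<^esub> f) = \<nu> f) \<and>
     (\<forall>f\<in>carrier G. \<forall>g\<in>carrier G. \<nu> (f \<otimes>\<^bsub>G\<^esub> g) \<le> \<nu> f + \<nu> g) \<and>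
     (\<forall>f\<in>carrier G. \<forall>g\<in>carrier G. \<nu> (g \<otimes>\<^bsub>G\<^esub> f \<otimes>\<^bsub>G\<^esub> inv\<^bsub>G\<^esub> g) = \<nu> f)"

definition conj_prod_of :: "('a, 'b) monoid_scheme \<Rightarrow> 'a set \<Rightarrow> 'a \<Rightarrow> nat \<Rightarrow> bool" where
  "conj_prod_of G H f k \<longleftrightarrow>
     (\<exists>xs. length xs = k \<and> set xs \<subseteq> carrier G \<times> H \<and>
        f = gprod G (map (\<lambda>(g, h). g \<otimes>\<^bsub>G\<^esub> h \<otimes>\<^bsub>G\<^esub> inv\<^bsub>G\<^esub> g) xs))"

definition nuH :: "('a, 'b) monoid_scheme \<Rightarrow> 'a set \<Rightarrow> 'a \<Rightarrow> enat" where
  "nuH G H f = (if \<exists>k. conj_prod_of G H f k then enat (LEAST k. conj_prod_of G H f k) else \<infinity>)"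

definition conjset :: "('a, 'b) monoid_scheme \<Rightarrow> 'a \<Rightarrow> 'a set \<Rightarrow> 'a set" where
  "conjset G g K = (\<lambda>k. g \<otimes>\<^bsub>G\<^esub> k \<otimes>\<^bsub>G\<^esub> inv\<^bsub>G\<^esub> g) ` K"

definition Df :: "('a, 'b) monoid_scheme \<Rightarrow> 'a set \<Rightarrow> 'a set \<Rightarrow> 'a set" where
  "Df G H K = {h0 \<in> carrier G. \<forall>gs. set gs \<subseteq> carrier G \<longrightarrow>
     (\<exists>h\<in>carrier G.
        \<forall>x\<in>conjset G (h \<otimes>\<^bsub>G\<^esub> h0 \<otimes>\<^bsub>G\<^esub> inv\<^bsub>G\<^esub> h) K.
        \<forall>y\<in>(\<Union>g\<in>set gs. conjset G g H). x \<otimes>\<^bsub>G\<^esub> y = y \<otimes>\<^bsub>G\<^esub> x)}"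

definition FM_pair :: "('a, 'b) monoid_scheme \<Rightarrow> 'a set \<Rightarrow> bool" where
  "FM_pair G H \<longleftrightarrow> subgroup H G \<and>
     (\<forall>f\<in>carrier G. nuH G H f < \<infinity>) \<and>
     (\<forall>hs. set hs \<subseteq> carrier G \<longrightarrow> Df G H (\<Union>h\<in>set hs. conjset G h H) \<noteq> {})"

definition FM :: "('a, 'b) monoid_scheme \<Rightarrow> bool" where
  "FM G \<longleftrightarrow> (\<exists>H. FM_pair G H)"

end

theory Submission
  imports Defs
begin


lemma fekete_aux:
  fixes f :: "nat \<Rightarrow> real"
  assumes sub: "\<And>m n. f (m + n) \<le> f m + f n"
  shows "f (q * m + r) \<le> real q * f m + f r"
proof (induction q)
  case 0 then show ?case by simp
next
  case (Suc q)
  have "f (Suc q * m + r) = f (m + (q * m + r))" by (simp add: add.assoc)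
  also have "\<dots> \<le> f m + f (q * m + r)" by (rule sub)
  also have "\<dots> \<le> f m + (real q * f m + f r)" using Suc by simp
  finally show ?case by (simp add: algebra_simps)
qed

lemma fekete:
  fixes f :: "nat \<Rightarrow> real"
  assumes sub: "\<And>m n. f (m + n) \<le> f m + f n" and nn: "\<And>n. 0 \<le> f n"
  shows "convergent (\<lambda>n. f n / real n)"
proof -
  define S where "S = (\<lambda>n. f n / real n) ` {1..}"
  define l where "l = Inf S"
  have Sne: "S \<noteq> {}" unfolding S_def by auto
  have bdd: "bdd_below S" unfolding S_def using nn by (intro bdd_belowI[of _ 0]) auto
  have low: "l \<le> f n / real n" if "n \<ge> 1" for n
    unfolding l_def using that bdd by (intro cInf_lower) (auto simp: S_def)
  have "(\<lambda>n. f n / real n) \<longlonglongrightarrow> l"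
    unfolding lim_sequentially
  proof (intro allI impI)
    fix e :: real assume e: "e > 0"
    have "Inf S < l + e/2" using e unfolding l_def by simp
    then obtain m where m1: "m \<ge> 1" and fm: "f m / real m < l + e/2"
      using cInf_less_iff[OF Sne bdd] unfolding S_def by auto
    define B where "B = (\<Sum>r<m. f r)"
    have B0: "B \<ge> 0" unfolding B_def using nn by (simp add: sum_nonneg)
    have fr: "f r \<le> B" if "r < m" for r
      unfolding B_def using that nn by (intro member_le_sum) auto
    define N where "N = nat \<lceil>2 * B / e\<rceil> + 1"
    have "\<forall>n\<ge>N. dist (f n / real n) l < e"
    proof (intro allI impI)
      fix n assume nN: "n \<ge> N"
      have n1: "n \<ge> 1" using nN unfolding N_def by simp
      have np: "real n > 0" using n1 by simp
      have "real N > 2 * B / e" unfolding N_def by linarith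
      then have "real n > 2 * B / e" using nN by (meson less_le_trans of_nat_le_iff)
      then have Bn: "B / real n < e / 2" using e np by (simp add: field_simps)
      have dec: "n = (n div m) * m + n mod m" by simp
      have "f n \<le> real (n div m) * f m + f (n mod m)"
        using fekete_aux[of f "n div m" m "n mod m", OF sub] dec by simp
      also have "\<dots> \<le> real (n div m) * f m + B" using fr m1 by simp
      also have "real (n div m) * f m \<le> (real n / real m) * f m"
      proof (rule mult_right_mono)
        have "real (n div m) * real m \<le> real n"
          by (metis of_nat_le_iff of_nat_mult div_times_less_eq_dividend)
        then show "real (n div m) \<le> real n / real m" using m1 by (simp add: field_simps)
      qed (use nn in auto)
      finally have "f n \<le> real n * (f m / real m) + B" by simp
      then have "f n / real n \<le> f m / real m + B / real n" using np by (simp add: field_simps)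
      then have "f n / real n < l + e" using fm Bn by linarith
      moreover have "l \<le> f n / real n" using low n1 by simp
      ultimately show "dist (f n / real n) l < e" by (simp add: dist_real_def)
    qed
    then show "\<exists>no. \<forall>n\<ge>no. dist (f n / real n) l < e" by blast
  qed
  then show ?thesis by (rule convergentI)
qed

lemma fekete_C:
  fixes f :: "nat \<Rightarrow> real"
  assumes sub: "\<And>m n. f (m + n) \<le> f m + f n + C" and nn: "\<And>n. 0 \<le> f n" and C: "C \<ge> 0"
  shows "convergent (\<lambda>n. f n / real n)"
proof -
  have "convergent (\<lambda>n. (f n + C) / real n)"
    using sub nn C by (intro fekete) (auto simp: algebra_simps)
  then obtain L where L: "(\<lambda>n. (f n + C) / real n) \<longlonglongrightarrow> L" by (auto simp: convergent_def)
  have "(\<lambda>n. C / real n) \<longlonglongrightarrow> 0" by (rule lim_const_over_n)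
  then have "(\<lambda>n. (f n + C) / real n - C / real n) \<longlonglongrightarrow> L - 0" using L by (intro tendsto_diff)
  then have "(\<lambda>n. f n / real n) \<longlonglongrightarrow> L" by (simp add: add_divide_distrib)
  then show ?thesis by (rule convergentI)
qed


lemma scaling:
  fixes F :: "real \<Rightarrow> nat \<Rightarrow> real"
  assumes B1: "\<And>t m n. F t (m + n) \<le> F t m + F t n + C"
    and B2: "\<And>t u n. F t n \<le> F u n + K * \<bar>t - u\<bar> * real n + D"
    and B3: "\<And>t n. F (-t) n \<le> F t n + D"
    and B4: "\<And>t n. 0 \<le> F t n"
    and B5: "\<And>p q n. 0 < q \<Longrightarrow> F (real p / real q) (q * n) = F 1 (p * n)"
    and C: "C \<ge> 0" and K: "K \<ge> 0"
  shows "\<exists>L. (\<lambda>n. F 1 n / real n) \<longlonglongrightarrow> L \<and> (\<lambda>n. F lam n / real n) \<longlonglongrightarrow> \<bar>lam\<bar> * L"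
proof -
  define L where "L t = lim (\<lambda>n. F t n / real n)" for t
  have conv: "(\<lambda>n. F t n / real n) \<longlonglongrightarrow> L t" for t
    unfolding L_def using fekete_C[of "F t" C] B1 B4 C by (simp add: convergent_LIMSEQ_iff)
  have lip: "L t \<le> L u + K * \<bar>t - u\<bar>" for t u
  proof (rule LIMSEQ_le[OF conv])
    show "(\<lambda>n. F u n / real n + K * \<bar>t - u\<bar> + D / real n) \<longlonglongrightarrow> L u + K * \<bar>t - u\<bar>"
      using tendsto_add[OF tendsto_add[OF conv tendsto_const] lim_const_over_n[of D]] by simp
    show "\<exists>N. \<forall>n\<ge>N. F t n / real n \<le> F u n / real n + K * \<bar>t - u\<bar> + D / real n"
    proof (intro exI allI impI)
      fix n :: nat assume "n \<ge> 1"
      then have np: "real n > 0" by simp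
      have "F t n / real n \<le> (F u n + K * \<bar>t - u\<bar> * real n + D) / real n"
        using B2[of t n u] np by (simp add: divide_right_mono)
      then show "F t n / real n \<le> F u n / real n + K * \<bar>t - u\<bar> + D / real n"
        using np by (simp add: add_divide_distrib)
    qed
  qed
  have negle: "L (-t) \<le> L t" for t
  proof (rule LIMSEQ_le[OF conv])
    show "(\<lambda>n. F t n / real n + D / real n) \<longlonglongrightarrow> L t"
      using tendsto_add[OF conv lim_const_over_n[of D]] by simp
    show "\<exists>N. \<forall>n\<ge>N. F (-t) n / real n \<le> F t n / real n + D / real n"
      using B3 by (auto intro!: exI[of _ 0] divide_right_mono simp flip: add_divide_distrib)
  qed
  have neg: "L (-t) = L t" for t using negle[of t] negle[of "-t"] by simp
  have rat: "L (real p / real q) = real p / real q * L 1" if pq: "p > 0" "q > 0" for p q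
  proof -
    have sq: "strict_mono (\<lambda>n. q * n)" "strict_mono (\<lambda>n. p * n)" using pq by (auto simp: strict_mono_def)
    have s1: "(\<lambda>n. F (real p / real q) (q * n) / real (q * n)) \<longlonglongrightarrow> L (real p / real q)"
      using LIMSEQ_subseq_LIMSEQ[OF conv sq(1)] by (simp add: o_def)
    have s2: "(\<lambda>n. F 1 (p * n) / real (p * n)) \<longlonglongrightarrow> L 1"
      using LIMSEQ_subseq_LIMSEQ[OF conv sq(2)] by (simp add: o_def)
    have eq: "F (real p / real q) (q * n) / real (q * n) = F 1 (p * n) / real (p * n) * (real p / real q)" for n
      unfolding B5[OF pq(2)] using pq by (cases "n = 0") (auto simp: field_simps)
    have "(\<lambda>n. F (real p / real q) (q * n) / real (q * n)) \<longlonglongrightarrow> L 1 * (real p / real q)"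
      unfolding eq by (intro tendsto_mult_right s2)
    with s1 show ?thesis using LIMSEQ_unique by (simp add: mult.commute)
  qed
  have pos: "L t = t * L 1" if t: "t \<ge> 0" for t
  proof (rule ccontr)
    assume ne: "L t \<noteq> t * L 1"
    define e where "e = \<bar>L t - t * L 1\<bar> / 2"
    have e: "e > 0" using ne unfolding e_def by simp
    define M where "M = K + \<bar>L 1\<bar> + 1"
    have M: "M > 0" using K unfolding M_def by simp
    obtain r where r: "r \<in> \<rat>" "t < r" "r < t + e / M"
      using Rats_dense_in_real[of t "t + e / M"] e M by auto
    obtain a b where ab: "b > 0" "r = of_int a / of_int b" using Rats_cases'[OF r(1)] by blast
    have "r > 0" using r t by linarith
    then have "0 < real_of_int a / real_of_int b" using ab by simp
    then have a: "a > 0" using ab(1) by (simp add: zero_less_divide_iff)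
    have rpq: "r = real (nat a) / real (nat b)" using ab a by simp
    have "L (real (nat a) / real (nat b)) = real (nat a) / real (nat b) * L 1"
      by (rule rat) (use a ab in auto)
    then have Lr: "L r = r * L 1" by (simp only: rpq[symmetric])
    have c: "\<bar>r - t\<bar> = \<bar>t - r\<bar>" by (rule abs_minus_commute)
    have d1: "\<bar>L t - L r\<bar> \<le> K * \<bar>t - r\<bar>" unfolding abs_le_iff using lip[of t r] lip[of r t, unfolded c] by linarith
    have "r * L 1 - t * L 1 = (r - t) * L 1" by (simp add: algebra_simps)
    then have d2: "\<bar>r * L 1 - t * L 1\<bar> = \<bar>t - r\<bar> * \<bar>L 1\<bar>" by (simp only: abs_mult abs_minus_commute)
    have d3: "(K + \<bar>L 1\<bar>) * \<bar>t - r\<bar> = K * \<bar>t - r\<bar> + \<bar>t - r\<bar> * \<bar>L 1\<bar>" by (simp add: algebra_simps)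
    have "\<bar>L t - t * L 1\<bar> \<le> \<bar>L t - L r\<bar> + \<bar>r * L 1 - t * L 1\<bar>" using Lr by linarith
    also have "\<dots> \<le> (K + \<bar>L 1\<bar>) * \<bar>t - r\<bar>" using d1 d2 d3 by linarith
    also have "\<dots> \<le> M * \<bar>t - r\<bar>" unfolding M_def by (intro mult_right_mono) auto
    also have "\<dots> < M * (e / M)" using r M by (intro mult_strict_left_mono) auto
    also have "\<dots> = e" using M by simp
    finally have "\<bar>L t - t * L 1\<bar> < e" .
    then show False using e e_def by simp
  qed
  have "L lam = \<bar>lam\<bar> * L 1"
  proof (cases "lam \<ge> 0")
    case True then show ?thesis using pos[OF True] by simp
  next
    case False
    have "L (-lam) = (-lam) * L 1" using pos[of "-lam"] False by linarith
    moreover have "L (-lam) = L lam" by (rule neg)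
    moreover have "\<bar>lam\<bar> = -lam" using False by linarith
    ultimately show ?thesis by simp
  qed
  then have "(\<lambda>n. F lam n / real n) \<longlonglongrightarrow> \<bar>lam\<bar> * L 1" using conv[of lam] by simp
  then show ?thesis using conv[of 1] by blast
qed



lemma gprod_Nil[simp]: "gprod G [] = \<one>\<^bsub>G\<^esub>" by (simp add: gprod_def)
lemma gprod_Cons[simp]: "gprod G (x#xs) = x \<otimes>\<^bsub>G\<^esub> gprod G xs" by (simp add: gprod_def)

context group begin

lemma inv_cancel_l[simp]: "x \<in> carrier G \<Longrightarrow> y \<in> carrier G \<Longrightarrow> inv x \<otimes> (x \<otimes> y) = y"
  by (simp flip: m_assoc)
lemma inv_cancel_r[simp]: "x \<in> carrier G \<Longrightarrow> y \<in> carrier G \<Longrightarrow> x \<otimes> (inv x \<otimes> y) = y"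
  by (simp flip: m_assoc)

lemma gprod_closed[simp]: "set xs \<subseteq> carrier G \<Longrightarrow> gprod G xs \<in> carrier G"
  by (induction xs) auto

lemma comm_gprod:
  assumes "x \<in> carrier G" "set ys \<subseteq> carrier G" "\<forall>y\<in>set ys. x \<otimes> y = y \<otimes> x"
  shows "x \<otimes> gprod G ys = gprod G ys \<otimes> x"
  using assms
proof (induction ys)
  case (Cons y ys)
  have x: "x \<in> carrier G" and y: "y \<in> carrier G" and ys: "set ys \<subseteq> carrier G"
    and xy: "x \<otimes> y = y \<otimes> x" using Cons.prems by auto
  have IH: "x \<otimes> gprod G ys = gprod G ys \<otimes> x" using Cons.IH Cons.prems by auto
  have P: "gprod G ys \<in> carrier G" using ys by simp
  have "x \<otimes> (y \<otimes> gprod G ys) = (x \<otimes> y) \<otimes> gprod G ys" using x y P by (simp add: m_assoc)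
  also have "\<dots> = (y \<otimes> x) \<otimes> gprod G ys" by (simp only: xy)
  also have "\<dots> = y \<otimes> (x \<otimes> gprod G ys)" using x y P by (simp add: m_assoc)
  also have "\<dots> = y \<otimes> (gprod G ys \<otimes> x)" by (simp only: IH)
  also have "\<dots> = (y \<otimes> gprod G ys) \<otimes> x" using x y P by (simp add: m_assoc)
  finally show ?case by simp
qed simp

lemma comm_gprod2:
  assumes "set xs \<subseteq> carrier G" "set ys \<subseteq> carrier G" "\<forall>x\<in>set xs. \<forall>y\<in>set ys. x \<otimes> y = y \<otimes> x"
  shows "gprod G xs \<otimes> gprod G ys = gprod G ys \<otimes> gprod G xs"
  using assms
proof (induction xs)
  case (Cons x xs)
  have c: "x \<otimes> gprod G ys = gprod G ys \<otimes> x" using Cons by (intro comm_gprod) auto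
  have IH: "gprod G xs \<otimes> gprod G ys = gprod G ys \<otimes> gprod G xs" using Cons by auto
  have "(x \<otimes> gprod G xs) \<otimes> gprod G ys = x \<otimes> (gprod G xs \<otimes> gprod G ys)"
    using Cons.prems by (simp add: m_assoc)
  also have "\<dots> = x \<otimes> (gprod G ys \<otimes> gprod G xs)" using IH by simp
  also have "\<dots> = (x \<otimes> gprod G ys) \<otimes> gprod G xs" using Cons.prems by (simp add: m_assoc)
  also have "\<dots> = (gprod G ys \<otimes> x) \<otimes> gprod G xs" using c by simp
  also have "\<dots> = gprod G ys \<otimes> (x \<otimes> gprod G xs)" using Cons.prems by (simp add: m_assoc)
  finally show ?case by simp
qed simp

lemma conj_gprod:
  assumes "p \<in> carrier G" "set xs \<subseteq> carrier G"
  shows "p \<otimes> gprod G xs \<otimes> inv p = gprod G (map (\<lambda>x. p \<otimes> x \<otimes> inv p) xs)"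
  using assms(2)
proof (induction xs)
  case Nil then show ?case using assms by simp
next
  case (Cons x xs)
  have "p \<otimes> (x \<otimes> gprod G xs) \<otimes> inv p = (p \<otimes> x \<otimes> inv p) \<otimes> (p \<otimes> gprod G xs \<otimes> inv p)"
    using Cons.prems assms by (simp add: m_assoc)
  also have "\<dots> = (p \<otimes> x \<otimes> inv p) \<otimes> gprod G (map (\<lambda>x. p \<otimes> x \<otimes> inv p) xs)"
    using Cons by simp
  finally show ?case by simp
qed

lemma comm_inv:
  assumes x: "x \<in> carrier G" and z: "z \<in> carrier G" and c: "x \<otimes> z = z \<otimes> x"
  shows "x \<otimes> inv z = inv z \<otimes> x"
proof -
  have "inv z \<otimes> x = inv z \<otimes> (x \<otimes> z) \<otimes> inv z" using x z by (simp add: m_assoc)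
  also have "\<dots> = inv z \<otimes> (z \<otimes> x) \<otimes> inv z" by (simp only: c)
  also have "\<dots> = x \<otimes> inv z" using x z by (simp add: m_assoc)
  finally show ?thesis by simp
qed

lemma comm_pow:
  assumes "x \<in> carrier G" "y \<in> carrier G" "x \<otimes> y = y \<otimes> x"
  shows "x \<otimes> y [^] (i::int) = y [^] i \<otimes> x"
proof -
  have n: "x \<otimes> y [^] (n::nat) = y [^] n \<otimes> x" for n
    using group_commutes_pow[of y x n] assms(1,2) assms(3)[symmetric] by simp
  show ?thesis
  proof (cases "i < 0")
    case True
    have "x \<otimes> inv (y [^] nat (-i)) = inv (y [^] nat (-i)) \<otimes> x"
      using n[of "nat (-i)"] assms by (intro comm_inv) auto
    then show ?thesis using True by (simp only: int_pow_def2[where a=y] if_True)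
  next
    case False then show ?thesis using n[of "nat i"] by (simp only: int_pow_def2[where a=y] if_False)
  qed
qed

lemma conj_hom: "p \<in> carrier G \<Longrightarrow> (\<lambda>x. p \<otimes> x \<otimes> inv p) \<in> hom G G"
  unfolding hom_def by (auto simp: m_assoc)

lemma conj_pow:
  assumes "p \<in> carrier G" "y \<in> carrier G"
  shows "p \<otimes> y [^] (i::int) \<otimes> inv p = (p \<otimes> y \<otimes> inv p) [^] i"
  using hom_int_pow[OF conj_hom[OF assms(1)] assms(2)] is_group by simp

end

definition PP :: "('a, 'b) monoid_scheme \<Rightarrow> 'a list \<Rightarrow> real list \<Rightarrow> (real \<Rightarrow> int) \<Rightarrow> 'a" where
  "PP G gs ss f = gprod G (map2 (\<lambda>g s. g [^]\<^bsub>G\<^esub> f s) gs ss)"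

lemma map2_map_right: "map2 h xs (map k ys) = map2 (\<lambda>x y. h x (k y)) xs ys"
  by (induction xs arbitrary: ys) (auto simp: zip_map2 split: list.splits)

lemma set_map2_pw: "x \<in> set (map2 (\<lambda>g s. P g s) gs ss) \<Longrightarrow> \<exists>g\<in>set gs. \<exists>s\<in>set ss. x = P g s"
  by (auto dest: set_zip_leftD set_zip_rightD)

lemma map2_subset: "(\<And>x y. x \<in> set xs \<Longrightarrow> y \<in> set ys \<Longrightarrow> f x y \<in> S) \<Longrightarrow> set (map2 f xs ys) \<subseteq> S"
  by (auto dest: set_zip_leftD set_zip_rightD)

locale cnorm = group G for G :: "('a, 'b) monoid_scheme" (structure) +
  fixes nu :: "'a \<Rightarrow> real"
  assumes cn: "conj_inv_pseudo_norm G nu"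
begin

lemma nu_one[simp]: "nu \<one> = 0" using cn by (simp add: conj_inv_pseudo_norm_def)
lemma nu_nonneg: "x \<in> carrier G \<Longrightarrow> 0 \<le> nu x" using cn by (simp add: conj_inv_pseudo_norm_def)
lemma nu_inv[simp]: "x \<in> carrier G \<Longrightarrow> nu (inv x) = nu x" using cn by (simp add: conj_inv_pseudo_norm_def)
lemma nu_mult: "x \<in> carrier G \<Longrightarrow> y \<in> carrier G \<Longrightarrow> nu (x \<otimes> y) \<le> nu x + nu y"
  using cn by (simp add: conj_inv_pseudo_norm_def)
lemma nu_conj[simp]: "f \<in> carrier G \<Longrightarrow> g \<in> carrier G \<Longrightarrow> nu (g \<otimes> f \<otimes> inv g) = nu f"
  using cn by (simp add: conj_inv_pseudo_norm_def)

lemma nu_comm: assumes "x \<in> carrier G" "y \<in> carrier G" shows "nu (x \<otimes> y) = nu (y \<otimes> x)"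
proof -
  have "y \<otimes> x = inv x \<otimes> (x \<otimes> y) \<otimes> inv (inv x)" using assms by (simp add: m_assoc)
  then show ?thesis using assms nu_conj[of "x \<otimes> y" "inv x"] by simp
qed

lemma nu_diff: assumes "a \<in> carrier G" "b \<in> carrier G" shows "nu a \<le> nu b + nu (inv b \<otimes> a)"
proof -
  have "a = b \<otimes> (inv b \<otimes> a)" using assms by simp
  then have "nu a = nu (b \<otimes> (inv b \<otimes> a))" by simp
  also have "\<dots> \<le> nu b + nu (inv b \<otimes> a)" using assms by (intro nu_mult) auto
  finally show ?thesis .
qed

lemma nu_commutator: assumes "a \<in> carrier G" "b \<in> carrier G"
  shows "nu (a \<otimes> b \<otimes> inv a \<otimes> inv b) \<le> 2 * nu b" "nu (a \<otimes> b \<otimes> inv a \<otimes> inv b) \<le> 2 * nu a"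
proof -
  have "nu (a \<otimes> b \<otimes> inv a \<otimes> inv b) \<le> nu (a \<otimes> b \<otimes> inv a) + nu (inv b)"
    using assms by (intro nu_mult) auto
  then show "nu (a \<otimes> b \<otimes> inv a \<otimes> inv b) \<le> 2 * nu b" using assms by simp
  have e: "a \<otimes> b \<otimes> inv a \<otimes> inv b = a \<otimes> (b \<otimes> inv a \<otimes> inv b)" using assms by (simp add: m_assoc)
  have "nu (a \<otimes> (b \<otimes> inv a \<otimes> inv b)) \<le> nu a + nu (b \<otimes> inv a \<otimes> inv b)"
    using assms by (intro nu_mult) auto
  then show "nu (a \<otimes> b \<otimes> inv a \<otimes> inv b) \<le> 2 * nu a" using assms e by simp
qed

lemma block:
  assumes A: "A \<in> carrier G" and B: "B \<in> carrier G" and C: "C \<in> carrier G" and p: "p \<in> carrier G"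
  shows "\<bar>nu (A \<otimes> (p \<otimes> B \<otimes> inv p) \<otimes> C) - nu (A \<otimes> B \<otimes> C)\<bar> \<le> 2 * nu p"
proof -
  have e1: "inv (A \<otimes> B \<otimes> C) \<otimes> (A \<otimes> (p \<otimes> B \<otimes> inv p) \<otimes> C)
      = inv C \<otimes> (inv B \<otimes> p \<otimes> inv (inv B) \<otimes> inv p) \<otimes> inv (inv C)"
    using assms by (simp add: m_assoc inv_mult_group)
  have e2: "inv (A \<otimes> (p \<otimes> B \<otimes> inv p) \<otimes> C) \<otimes> (A \<otimes> B \<otimes> C)
      = inv C \<otimes> (p \<otimes> inv B \<otimes> inv p \<otimes> inv (inv B)) \<otimes> inv (inv C)"
    using assms by (simp add: m_assoc inv_mult_group)
  have q1: "inv B \<otimes> p \<otimes> inv (inv B) \<otimes> inv p \<in> carrier G" using assms by simp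
  have q2: "p \<otimes> inv B \<otimes> inv p \<otimes> inv (inv B) \<in> carrier G" using assms by simp
  have l1: "A \<otimes> (p \<otimes> B \<otimes> inv p) \<otimes> C \<in> carrier G" and l2: "A \<otimes> B \<otimes> C \<in> carrier G"
    using assms by auto
  note a1 = nu_diff[OF l1 l2, unfolded e1]
  note a2 = nu_diff[OF l2 l1, unfolded e2]
  note c1 = nu_conj[OF q1 inv_closed[OF C]]
  note c2 = nu_conj[OF q2 inv_closed[OF C]]
  note d1 = nu_commutator(1)[OF inv_closed[OF B] p]
  note d2 = nu_commutator(2)[OF p inv_closed[OF B]]
  have 1: "nu (A \<otimes> (p \<otimes> B \<otimes> inv p) \<otimes> C) \<le> nu (A \<otimes> B \<otimes> C) + 2 * nu p"
    using a1 c1 d1 by linarith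
  have 2: "nu (A \<otimes> B \<otimes> C) \<le> nu (A \<otimes> (p \<otimes> B \<otimes> inv p) \<otimes> C) + 2 * nu p"
    using a2 c2 d2 by linarith
  show ?thesis using 1 2 by linarith
qed


lemma interleave:
  assumes "length xs = length zs" "set xs \<subseteq> carrier G" "set zs \<subseteq> carrier G"
    "\<forall>x\<in>set xs. \<forall>z\<in>set zs. z \<otimes> x = x \<otimes> z"
  shows "gprod G xs \<otimes> gprod G zs = gprod G (map2 (\<otimes>) xs zs)"
  using assms
proof (induction xs zs rule: list_induct2)
  case Nil then show ?case by simp
next
  case (Cons x xs z zs)
  have x: "x \<in> carrier G" and z: "z \<in> carrier G" and xs: "set xs \<subseteq> carrier G"
    and zs: "set zs \<subseteq> carrier G" using Cons.prems by auto
  have cz: "z \<otimes> gprod G xs = gprod G xs \<otimes> z"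
    using Cons.prems by (intro comm_gprod) auto
  have IH: "gprod G xs \<otimes> gprod G zs = gprod G (map2 (\<otimes>) xs zs)"
    using Cons.IH Cons.prems by auto
  have P1: "gprod G xs \<in> carrier G" "gprod G zs \<in> carrier G" using xs zs by auto
  have "(x \<otimes> gprod G xs) \<otimes> (z \<otimes> gprod G zs) = x \<otimes> ((gprod G xs \<otimes> z) \<otimes> gprod G zs)"
    using x z P1 by (simp add: m_assoc)
  also have "\<dots> = x \<otimes> ((z \<otimes> gprod G xs) \<otimes> gprod G zs)" by (simp only: cz)
  also have "\<dots> = (x \<otimes> z) \<otimes> (gprod G xs \<otimes> gprod G zs)" using x z P1 by (simp add: m_assoc)
  also have "\<dots> = (x \<otimes> z) \<otimes> gprod G (map2 (\<otimes>) xs zs)" by (simp only: IH)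
  finally show ?case by simp
qed

lemma unconj_chain:
  assumes "length xs = length ys" "set xs \<subseteq> carrier G" "set ys \<subseteq> carrier G" "p \<in> carrier G"
  shows "\<forall>A\<in>carrier G. \<bar>nu (A \<otimes> gprod G (map2 (\<lambda>x y. x \<otimes> (p \<otimes> y \<otimes> inv p)) xs ys))
                    - nu (A \<otimes> gprod G (map2 (\<otimes>) xs ys))\<bar> \<le> 2 * nu p * length xs"
  using assms
proof (induction xs ys rule: list_induct2)
  case Nil then show ?case by simp
next
  case (Cons x xs y ys)
  have x: "x \<in> carrier G" and y: "y \<in> carrier G" and xs: "set xs \<subseteq> carrier G"
    and ys: "set ys \<subseteq> carrier G" and p: "p \<in> carrier G" using Cons.prems by auto
  define R' where "R' = gprod G (map2 (\<lambda>x y. x \<otimes> (p \<otimes> y \<otimes> inv p)) xs ys)"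
  define R where "R = gprod G (map2 (\<otimes>) xs ys)"
  have R': "R' \<in> carrier G" unfolding R'_def using xs ys p
    by (intro gprod_closed map2_subset) (auto simp: subsetD)
  have R: "R \<in> carrier G" unfolding R_def using xs ys
    by (intro gprod_closed map2_subset) (auto simp: subsetD)
  show ?case
  proof
    fix A assume A: "A \<in> carrier G"
    have IH: "\<bar>nu ((A \<otimes> (x \<otimes> (p \<otimes> y \<otimes> inv p))) \<otimes> R') - nu ((A \<otimes> (x \<otimes> (p \<otimes> y \<otimes> inv p))) \<otimes> R)\<bar>
       \<le> 2 * nu p * length xs"
      using Cons.IH xs ys p A x y unfolding R_def R'_def by simp
    have bl: "\<bar>nu ((A \<otimes> x) \<otimes> (p \<otimes> y \<otimes> inv p) \<otimes> R) - nu ((A \<otimes> x) \<otimes> y \<otimes> R)\<bar> \<le> 2 * nu p"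
      using A x y p R by (intro block) auto
    have e1: "(A \<otimes> x) \<otimes> (p \<otimes> y \<otimes> inv p) \<otimes> R = (A \<otimes> (x \<otimes> (p \<otimes> y \<otimes> inv p))) \<otimes> R"
      using A x y p R by (simp add: m_assoc)
    have e2: "A \<otimes> gprod G (map2 (\<lambda>x y. x \<otimes> (p \<otimes> y \<otimes> inv p)) (x#xs) (y#ys))
       = (A \<otimes> (x \<otimes> (p \<otimes> y \<otimes> inv p))) \<otimes> R'"
      using A x y p R' unfolding R'_def by (simp add: m_assoc)
    have e3: "A \<otimes> gprod G (map2 (\<otimes>) (x#xs) (y#ys)) = (A \<otimes> x) \<otimes> y \<otimes> R"
      using A x y p R unfolding R_def by (simp add: m_assoc)
    have "nu p \<ge> 0" using p nu_nonneg by simp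
    then show "\<bar>nu (A \<otimes> gprod G (map2 (\<lambda>x y. x \<otimes> (p \<otimes> y \<otimes> inv p)) (x#xs) (y#ys)))
                    - nu (A \<otimes> gprod G (map2 (\<otimes>) (x#xs) (y#ys)))\<bar> \<le> 2 * nu p * length (x#xs)"
      using IH bl unfolding e1 e2 e3 by (simp add: algebra_simps)
  qed
qed


lemma pw_closed: "set gs \<subseteq> carrier G \<Longrightarrow> set (map2 (\<lambda>g s. g [^] (f s::int)) gs ss) \<subseteq> carrier G"
  by (intro map2_subset) (auto simp: subsetD)

lemma PP_closed[simp]: "set gs \<subseteq> carrier G \<Longrightarrow> PP G gs ss f \<in> carrier G"
  unfolding PP_def by (intro gprod_closed pw_closed)

lemma pw_add:
  assumes "length gs = length ss" "set gs \<subseteq> carrier G"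
  shows "map2 (\<otimes>) (map2 (\<lambda>g s. g [^] (f s::int)) gs ss) (map2 (\<lambda>g s. g [^] (h s::int)) gs ss)
        = map2 (\<lambda>g s. g [^] (f s + h s)) gs ss"
  using assms by (induction gs ss rule: list_induct2) (auto simp: int_pow_mult)

lemma PP_zero: "set gs \<subseteq> carrier G \<Longrightarrow> PP G gs ss (\<lambda>_. 0) = \<one>"
proof (induction gs arbitrary: ss)
  case Nil then show ?case by (simp add: PP_def)
next
  case (Cons g gs) then show ?case by (cases ss) (auto simp: PP_def)
qed

lemma block_sum:
  assumes gs: "set gs \<subseteq> carrier G" and len: "length gs = length ss" and p: "p \<in> carrier G"
    and comm: "\<forall>x\<in>set gs. \<forall>y\<in>set gs. (p \<otimes> x \<otimes> inv p) \<otimes> y = y \<otimes> (p \<otimes> x \<otimes> inv p)"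
  shows "\<bar>nu (PP G gs ss (\<lambda>s. f s + h s)) - nu (PP G gs ss f \<otimes> PP G gs ss h)\<bar>
         \<le> 2 * nu p * (length gs + 1)"
proof -
  define xs where "xs = map2 (\<lambda>g s. g [^] (f s::int)) gs ss"
  define ys where "ys = map2 (\<lambda>g s. g [^] (h s::int)) gs ss"
  have xs: "set xs \<subseteq> carrier G" and ys: "set ys \<subseteq> carrier G"
    unfolding xs_def ys_def by (rule pw_closed[OF gs])+
  have lxs: "length xs = length gs" "length ys = length gs" unfolding xs_def ys_def using len by auto
  have PPf: "PP G gs ss f = gprod G xs" and PPh: "PP G gs ss h = gprod G ys"
    unfolding PP_def xs_def ys_def by auto
  have Pf: "gprod G xs \<in> carrier G" and Ph: "gprod G ys \<in> carrier G" using xs ys by auto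
  have s1: "\<bar>nu (gprod G xs \<otimes> (p \<otimes> gprod G ys \<otimes> inv p) \<otimes> \<one>) - nu (gprod G xs \<otimes> gprod G ys \<otimes> \<one>)\<bar> \<le> 2 * nu p"
    using Pf Ph p by (intro block) auto
  have s2: "p \<otimes> gprod G ys \<otimes> inv p = gprod G (map (\<lambda>x. p \<otimes> x \<otimes> inv p) ys)"
    using conj_gprod p ys by blast
  have cm: "z \<otimes> x = x \<otimes> z" if xin: "x \<in> set xs" and zin: "z \<in> set (map (\<lambda>x. p \<otimes> x \<otimes> inv p) ys)" for x z
  proof -
    obtain gj s where gj: "gj \<in> set gs" and x: "x = gj [^] f s"
      using set_map2_pw[of x "\<lambda>g s. g [^] f s" gs ss] xin unfolding xs_def by blast
    obtain y where y: "y \<in> set ys" and z: "z = p \<otimes> y \<otimes> inv p" using zin by auto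
    obtain gi s' where gi: "gi \<in> set gs" and y': "y = gi [^] h s'"
      using set_map2_pw[of y "\<lambda>g s. g [^] h s" gs ss] y unfolding ys_def by blast
    have gic: "gi \<in> carrier G" "gj \<in> carrier G" using gi gj gs by auto
    have z': "z = (p \<otimes> gi \<otimes> inv p) [^] h s'" using z y' conj_pow p gic by simp
    have c1: "(p \<otimes> gi \<otimes> inv p) \<otimes> gj = gj \<otimes> (p \<otimes> gi \<otimes> inv p)" using comm gi gj by blast
    have c2: "(p \<otimes> gi \<otimes> inv p) \<otimes> gj [^] f s = gj [^] f s \<otimes> (p \<otimes> gi \<otimes> inv p)"
      using comm_pow[OF _ _ c1] gic p by simp
    have c3: "gj [^] f s \<otimes> (p \<otimes> gi \<otimes> inv p) [^] h s' = (p \<otimes> gi \<otimes> inv p) [^] h s' \<otimes> gj [^] f s"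
      using comm_pow[OF _ _ c2[symmetric]] gic p by simp
    show ?thesis using c3 x z' by simp
  qed
  have s3: "gprod G xs \<otimes> gprod G (map (\<lambda>x. p \<otimes> x \<otimes> inv p) ys)
      = gprod G (map2 (\<lambda>x y. x \<otimes> (p \<otimes> y \<otimes> inv p)) xs ys)"
    using interleave[of xs "map (\<lambda>x. p \<otimes> x \<otimes> inv p) ys"] xs ys p lxs cm
    by (auto simp: map2_map_right)
  note s5 = unconj_chain[OF _ xs ys p, rule_format, of \<one>]
  have s6: "map2 (\<otimes>) xs ys = map2 (\<lambda>g s. g [^] (f s + h s)) gs ss"
    unfolding xs_def ys_def using pw_add len gs by blast
  have "nu p \<ge> 0" using p nu_nonneg by simp
  have Q1: "gprod G (map2 (\<lambda>x y. x \<otimes> (p \<otimes> y \<otimes> inv p)) xs ys) \<in> carrier G"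
    using xs ys p by (intro gprod_closed map2_subset) (auto simp: subsetD)
  have Q2: "gprod G (map2 (\<lambda>g s. g [^] (f s + h s)) gs ss) \<in> carrier G"
    by (intro gprod_closed pw_closed gs)
  have Q3: "PP G gs ss (\<lambda>s. f s + h s) = gprod G (map2 (\<lambda>g s. g [^] (f s + h s)) gs ss)"
    by (simp add: PP_def)
  from s1 s5 lxs Q1 Q2 Pf Ph show ?thesis unfolding s2 s3 s6 PPf PPh Q3
    by (simp add: distrib_left)
qed


lemma nu_pow_nat: "x \<in> carrier G \<Longrightarrow> nu (x [^] (n::nat)) \<le> real n * nu x"
proof (induction n)
  case 0 then show ?case by simp
next
  case (Suc n)
  have "nu (x [^] Suc n) = nu (x [^] n \<otimes> x)" by simp
  also have "\<dots> \<le> nu (x [^] n) + nu x" using Suc.prems by (intro nu_mult) auto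
  finally show ?case using Suc by (simp add: algebra_simps)
qed

lemma nu_pow: assumes x: "x \<in> carrier G" shows "nu (x [^] (i::int)) \<le> real_of_int \<bar>i\<bar> * nu x"
proof (cases "i < 0")
  case True
  have "x [^] i = inv (x [^] nat (-i))" using True by (simp only: int_pow_def2[where a=x] if_True)
  then have "nu (x [^] i) = nu (x [^] nat (-i))" using x by simp
  also have "\<dots> \<le> real (nat (-i)) * nu x" using nu_pow_nat x by blast
  finally show ?thesis using True by simp
next
  case False
  have "x [^] i = x [^] nat i" using False by (simp only: int_pow_def2[where a=x] if_False)
  then have "nu (x [^] i) = nu (x [^] nat i)" by simp
  also have "\<dots> \<le> real (nat i) * nu x" using nu_pow_nat x by blast
  finally show ?thesis using False by simp
qed

lemma PP_bound:
  assumes "length gs = length ss" "set gs \<subseteq> carrier G" "\<forall>g\<in>set gs. nu g \<le> K"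
  shows "nu (PP G gs ss f) \<le> K * sum_list (map (\<lambda>s. real_of_int \<bar>f s\<bar>) ss)"
  using assms
proof (induction gs ss rule: list_induct2)
  case Nil then show ?case by (simp add: PP_def)
next
  case (Cons g gs s ss)
  have g: "g \<in> carrier G" and gs: "set gs \<subseteq> carrier G" using Cons.prems by auto
  have IH: "nu (PP G gs ss f) \<le> K * sum_list (map (\<lambda>s. real_of_int \<bar>f s\<bar>) ss)"
    using Cons.IH Cons.prems by auto
  have PPc: "PP G (g # gs) ss' f = g [^] f s \<otimes> PP G gs ss f" if "ss' = s # ss" for ss'
    using that by (simp add: PP_def)
  have "nu (PP G (g # gs) (s # ss) f) \<le> nu (g [^] f s) + nu (PP G gs ss f)"
    unfolding PPc[OF refl] using g gs by (intro nu_mult) auto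
  also have "nu (g [^] f s) \<le> real_of_int \<bar>f s\<bar> * K"
  proof -
    have "nu (g [^] f s) \<le> real_of_int \<bar>f s\<bar> * nu g" by (rule nu_pow[OF g])
    also have "\<dots> \<le> real_of_int \<bar>f s\<bar> * K" using Cons.prems by (intro mult_left_mono) auto
    finally show ?thesis .
  qed
  finally show ?case using IH by (simp add: algebra_simps)
qed

lemma PP_props:
  assumes gs: "set gs \<subseteq> carrier G" and len: "length gs = length ss" and p: "p \<in> carrier G"
    and comm: "\<forall>x\<in>set gs. \<forall>y\<in>set gs. (p \<otimes> x \<otimes> inv p) \<otimes> y = y \<otimes> (p \<otimes> x \<otimes> inv p)"
    and Kb: "\<forall>g\<in>set gs. nu g \<le> K"
  defines "C \<equiv> 2 * nu p * (length gs + 1)"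
  shows "nu (PP G gs ss (\<lambda>s. f s + h s)) \<le> nu (PP G gs ss f) + nu (PP G gs ss h) + C"
    and "nu (PP G gs ss (\<lambda>s. - f s)) \<le> nu (PP G gs ss f) + C"
    and "nu (PP G gs ss f) \<le> nu (PP G gs ss h) + K * sum_list (map (\<lambda>s. real_of_int \<bar>f s - h s\<bar>) ss) + C"
proof -
  note bs = block_sum[OF gs len p comm, folded C_def]
  have Pc: "PP G gs ss u \<in> carrier G" for u using gs by simp
  show A1: "nu (PP G gs ss (\<lambda>s. f s + h s)) \<le> nu (PP G gs ss f) + nu (PP G gs ss h) + C" for f h
    using bs[of f h] nu_mult[OF Pc Pc, of f h] by linarith
  show "nu (PP G gs ss (\<lambda>s. - f s)) \<le> nu (PP G gs ss f) + C"
  proof -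
    have z: "(\<lambda>s. f s + - f s) = (\<lambda>_. 0::int)" by auto
    have 1: "nu (PP G gs ss f \<otimes> PP G gs ss (\<lambda>s. - f s)) \<le> C"
      using bs[of f "\<lambda>s. - f s"] unfolding z PP_zero[OF gs] by simp
    have "nu (PP G gs ss (\<lambda>s. - f s)) \<le> nu (inv (PP G gs ss f)) + nu (inv (inv (PP G gs ss f)) \<otimes> PP G gs ss (\<lambda>s. - f s))"
      using Pc by (intro nu_diff) auto
    then show ?thesis using 1 Pc by simp
  qed
  show "nu (PP G gs ss f) \<le> nu (PP G gs ss h) + K * sum_list (map (\<lambda>s. real_of_int \<bar>f s - h s\<bar>) ss) + C"
  proof -
    have z: "(\<lambda>s. h s + (f s - h s)) = f" by auto
    have "nu (PP G gs ss f) \<le> nu (PP G gs ss h) + nu (PP G gs ss (\<lambda>s. f s - h s)) + C"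
      using A1[of h "\<lambda>s. f s - h s"] unfolding z .
    moreover have "nu (PP G gs ss (\<lambda>s. f s - h s)) \<le> K * sum_list (map (\<lambda>s. real_of_int \<bar>f s - h s\<bar>) ss)"
      using PP_bound[OF len gs Kb] .
    ultimately show ?thesis by linarith
  qed
qed

end

lemma fl1: fixes x y :: real shows "real_of_int \<bar>\<lfloor>x + y\<rfloor> - (\<lfloor>x\<rfloor> + \<lfloor>y\<rfloor>)\<bar> \<le> 2"
proof -
  have "real_of_int \<lfloor>x + y\<rfloor> \<le> x + y" "x + y < real_of_int \<lfloor>x + y\<rfloor> + 1"
    "real_of_int \<lfloor>x\<rfloor> \<le> x" "x < real_of_int \<lfloor>x\<rfloor> + 1"
    "real_of_int \<lfloor>y\<rfloor> \<le> y" "y < real_of_int \<lfloor>y\<rfloor> + 1" by simp_all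
  then show ?thesis unfolding abs_le_iff by simp linarith
qed

lemma fl2: fixes x y :: real shows "real_of_int \<bar>\<lfloor>x\<rfloor> - \<lfloor>y\<rfloor>\<bar> \<le> \<bar>x - y\<bar> + 1"
proof -
  have "real_of_int \<lfloor>x\<rfloor> \<le> x" "x < real_of_int \<lfloor>x\<rfloor> + 1"
    "real_of_int \<lfloor>y\<rfloor> \<le> y" "y < real_of_int \<lfloor>y\<rfloor> + 1" by simp_all
  then show ?thesis unfolding abs_le_iff by simp linarith
qed

lemma fl3: fixes x :: real shows "real_of_int \<bar>\<lfloor>- x\<rfloor> - (- \<lfloor>x\<rfloor>)\<bar> \<le> 2"
proof -
  have "real_of_int \<lfloor>-x\<rfloor> \<le> -x" "-x < real_of_int \<lfloor>-x\<rfloor> + 1"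
    "real_of_int \<lfloor>x\<rfloor> \<le> x" "x < real_of_int \<lfloor>x\<rfloor> + 1" by simp_all
  then show ?thesis unfolding abs_le_iff by simp linarith
qed

lemma sum_list_ones: "(\<Sum>s\<leftarrow>ss. (1::real)) = real (length ss)"
  by (induction ss) auto

lemma sum_list_le_const:
  "(\<And>s. s \<in> set ss \<Longrightarrow> (f s::real) \<le> c) \<Longrightarrow> sum_list (map f ss) \<le> c * real (length ss)"
  by (induction ss) (auto simp: algebra_simps intro: add_mono)

lemma le_sum_list_nonneg:
  "(\<And>x. x \<in> set xs \<Longrightarrow> 0 \<le> (f x::real)) \<Longrightarrow> x \<in> set xs \<Longrightarrow> f x \<le> sum_list (map f xs)"
proof (induction xs)
  case (Cons a xs)
  have "0 \<le> sum_list (map f xs)" using Cons.prems by (intro sum_list_nonneg) auto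
  then show ?case using Cons by (auto intro: add_increasing add_increasing2)
qed simp

theorem lemma3p4:
  fixes G :: "('a, 'b) monoid_scheme" and \<nu> :: "'a \<Rightarrow> real"
    and gs :: "'a list" and ss :: "real list" and lam :: real
  assumes "group G" and "FM G" and "conj_inv_pseudo_norm G \<nu>"
    and "set gs \<subseteq> carrier G" and "length ss = length gs"
  shows "\<exists>L. ((\<lambda>n::nat. \<nu> (gprod G (map2 (\<lambda>g s. g [^]\<^bsub>G\<^esub> \<lfloor>s * real n\<rfloor>) gs ss)) / real n)
              \<longlonglongrightarrow> L)
          \<and> ((\<lambda>n::nat. \<nu> (gprod G (map2 (\<lambda>g s. g [^]\<^bsub>G\<^esub> \<lfloor>lam * s * real n\<rfloor>) gs ss)) / real n)
              \<longlonglongrightarrow> \<bar>lam\<bar> * L)"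
proof -
  interpret cnorm G \<nu>
    by (rule cnorm.intro[OF assms(1)]) (simp add: cnorm_axioms_def assms(3))
  have gs: "set gs \<subseteq> carrier G" and len: "length gs = length ss" using assms by auto
  obtain H where "FM_pair G H" using assms(2) FM_def by blast
  then have sub: "subgroup H G" and fin: "\<forall>f\<in>carrier G. nuH G H f < \<infinity>"
    and Dne: "\<forall>hs. set hs \<subseteq> carrier G \<longrightarrow> Df G H (\<Union>h\<in>set hs. conjset G h H) \<noteq> {}"
    by (auto simp: FM_pair_def)
  have Hc: "H \<subseteq> carrier G" using sub subgroup.subset by blast
  define cpf where "cpf = (\<lambda>(c, k). c \<otimes>\<^bsub>G\<^esub> k \<otimes>\<^bsub>G\<^esub> inv\<^bsub>G\<^esub> c)"
  have "\<exists>xs. set xs \<subseteq> carrier G \<times> H \<and> g = gprod G (map cpf xs)" if g: "g \<in> set gs" for g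
  proof -
    have "nuH G H g < \<infinity>" using fin g gs by auto
    then have "\<exists>k. conj_prod_of G H g k" unfolding nuH_def by (auto split: if_splits)
    then show ?thesis unfolding conj_prod_of_def cpf_def by blast
  qed
  then obtain Xf where Xf: "\<And>g. g \<in> set gs \<Longrightarrow> set (Xf g) \<subseteq> carrier G \<times> H \<and> g = gprod G (map cpf (Xf g))"
    by metis
  define cs where "cs = concat (map (\<lambda>g. map fst (Xf g)) gs)"
  have csc: "set cs \<subseteq> carrier G" unfolding cs_def using Xf by fastforce
  define KS where "KS = (\<Union>c\<in>set cs. conjset G c H)"
  obtain h0 where h0: "h0 \<in> Df G H KS" using Dne csc unfolding KS_def by blast
  then have h0c: "h0 \<in> carrier G" unfolding Df_def by blast
  obtain h where hc: "h \<in> carrier G" and hp: "\<forall>x\<in>conjset G (h \<otimes>\<^bsub>G\<^esub> h0 \<otimes>\<^bsub>G\<^esub> inv\<^bsub>G\<^esub> h) KS.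
        \<forall>y\<in>(\<Union>g\<in>set cs. conjset G g H). x \<otimes>\<^bsub>G\<^esub> y = y \<otimes>\<^bsub>G\<^esub> x"
    using h0 csc unfolding Df_def by blast
  define p where "p = h \<otimes>\<^bsub>G\<^esub> h0 \<otimes>\<^bsub>G\<^esub> inv\<^bsub>G\<^esub> h"
  have p: "p \<in> carrier G" unfolding p_def using hc h0c by simp
  have cpc: "set (map cpf (Xf g)) \<subseteq> carrier G" if "g \<in> set gs" for g
    using Xf[OF that] Hc unfolding cpf_def by auto
  have comm: "\<forall>x\<in>set gs. \<forall>y\<in>set gs. (p \<otimes>\<^bsub>G\<^esub> x \<otimes>\<^bsub>G\<^esub> inv\<^bsub>G\<^esub> p) \<otimes>\<^bsub>G\<^esub> y = y \<otimes>\<^bsub>G\<^esub> (p \<otimes>\<^bsub>G\<^esub> x \<otimes>\<^bsub>G\<^esub> inv\<^bsub>G\<^esub> p)"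
  proof (intro ballI)
    fix x y assume x: "x \<in> set gs" and y: "y \<in> set gs"
    define A where "A = map (\<lambda>z. p \<otimes>\<^bsub>G\<^esub> z \<otimes>\<^bsub>G\<^esub> inv\<^bsub>G\<^esub> p) (map cpf (Xf x))"
    define B where "B = map cpf (Xf y)"
    have xA: "p \<otimes>\<^bsub>G\<^esub> x \<otimes>\<^bsub>G\<^esub> inv\<^bsub>G\<^esub> p = gprod G A"
      unfolding A_def using conj_gprod[OF p cpc[OF x]] Xf[OF x] by simp
    have yB: "y = gprod G B" unfolding B_def using Xf[OF y] by simp
    have Ac: "set A \<subseteq> carrier G" unfolding A_def using cpc[OF x] p by auto
    have Bc: "set B \<subseteq> carrier G" unfolding B_def using cpc[OF y] .
    have AB: "a \<otimes>\<^bsub>G\<^esub> b = b \<otimes>\<^bsub>G\<^esub> a" if a: "a \<in> set A" and b: "b \<in> set B" for a b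
    proof -
      obtain c k where ck: "(c, k) \<in> set (Xf x)" and aeq: "a = p \<otimes>\<^bsub>G\<^esub> (c \<otimes>\<^bsub>G\<^esub> k \<otimes>\<^bsub>G\<^esub> inv\<^bsub>G\<^esub> c) \<otimes>\<^bsub>G\<^esub> inv\<^bsub>G\<^esub> p"
        using a unfolding A_def cpf_def by auto
      obtain c' k' where ck': "(c', k') \<in> set (Xf y)" and beq: "b = c' \<otimes>\<^bsub>G\<^esub> k' \<otimes>\<^bsub>G\<^esub> inv\<^bsub>G\<^esub> c'"
        using b unfolding B_def cpf_def by auto
      have c: "c \<in> set cs" using ck x unfolding cs_def by force
      have c': "c' \<in> set cs" using ck' y unfolding cs_def by force
      have k: "k \<in> H" using ck Xf[OF x] by auto
      have k': "k' \<in> H" using ck' Xf[OF y] by auto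
      have "c \<otimes>\<^bsub>G\<^esub> k \<otimes>\<^bsub>G\<^esub> inv\<^bsub>G\<^esub> c \<in> KS" unfolding KS_def conjset_def using c k by blast
      then have "a \<in> conjset G (h \<otimes>\<^bsub>G\<^esub> h0 \<otimes>\<^bsub>G\<^esub> inv\<^bsub>G\<^esub> h) KS"
        unfolding conjset_def aeq p_def by blast
      moreover have "b \<in> (\<Union>g\<in>set cs. conjset G g H)" unfolding conjset_def beq using c' k' by blast
      ultimately show ?thesis using hp by blast
    qed
    show "(p \<otimes>\<^bsub>G\<^esub> x \<otimes>\<^bsub>G\<^esub> inv\<^bsub>G\<^esub> p) \<otimes>\<^bsub>G\<^esub> y = y \<otimes>\<^bsub>G\<^esub> (p \<otimes>\<^bsub>G\<^esub> x \<otimes>\<^bsub>G\<^esub> inv\<^bsub>G\<^esub> p)"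
      unfolding xA yB using comm_gprod2[OF Ac Bc] AB by blast
  qed
  define K where "K = sum_list (map \<nu> gs)"
  have nn: "\<And>x. x \<in> set gs \<Longrightarrow> 0 \<le> \<nu> x" using gs nu_nonneg by blast
  have Kb: "\<forall>g\<in>set gs. \<nu> g \<le> K" unfolding K_def using le_sum_list_nonneg[of gs \<nu>, OF nn] by blast
  have K0: "K \<ge> 0" unfolding K_def using nn by (intro sum_list_nonneg) auto
  define C0 where "C0 = 2 * \<nu> p * (length gs + 1)"
  have C0: "C0 \<ge> 0" unfolding C0_def using nu_nonneg[OF p] by simp
  note PPp = PP_props[OF gs len p comm Kb, folded C0_def]
  define k where "k = real (length ss)"
  define S where "S = sum_list (map abs ss)"
  have S0: "S \<ge> 0" unfolding S_def by (intro sum_list_nonneg) auto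
  define F where "F t n = \<nu> (PP G gs ss (\<lambda>s. \<lfloor>t * s * real n\<rfloor>))" for t n
  define D where "D = 2 * C0 + 2 * (K * k)"
  have k0: "k \<ge> 0" unfolding k_def by simp
  have Kk: "K * k \<ge> 0" using K0 k0 by simp
  have Kk2: "K * (2 * k) = 2 * (K * k)" by simp
  have D0: "D \<ge> 0" unfolding D_def using C0 Kk by simp
  have B1: "F t (m + n) \<le> F t m + F t n + D" for t m n
  proof -
    have 1: "F t (m + n) \<le> \<nu> (PP G gs ss (\<lambda>s. \<lfloor>t * s * real m\<rfloor> + \<lfloor>t * s * real n\<rfloor>))
       + K * sum_list (map (\<lambda>s. real_of_int \<bar>\<lfloor>t * s * real (m + n)\<rfloor> - (\<lfloor>t * s * real m\<rfloor> + \<lfloor>t * s * real n\<rfloor>)\<bar>) ss) + C0"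
      unfolding F_def by (rule PPp(3))
    have 2: "sum_list (map (\<lambda>s. real_of_int \<bar>\<lfloor>t * s * real (m + n)\<rfloor> - (\<lfloor>t * s * real m\<rfloor> + \<lfloor>t * s * real n\<rfloor>)\<bar>) ss) \<le> 2 * k"
      unfolding k_def
    proof (rule sum_list_le_const)
      fix s show "real_of_int \<bar>\<lfloor>t * s * real (m + n)\<rfloor> - (\<lfloor>t * s * real m\<rfloor> + \<lfloor>t * s * real n\<rfloor>)\<bar> \<le> 2"
        using fl1[of "t * s * real m" "t * s * real n"] by (simp add: distrib_left)
    qed
    have 3: "\<nu> (PP G gs ss (\<lambda>s. \<lfloor>t * s * real m\<rfloor> + \<lfloor>t * s * real n\<rfloor>)) \<le> F t m + F t n + C0"
      unfolding F_def by (rule PPp(1))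
    have "K * sum_list (map (\<lambda>s. real_of_int \<bar>\<lfloor>t * s * real (m + n)\<rfloor> - (\<lfloor>t * s * real m\<rfloor> + \<lfloor>t * s * real n\<rfloor>)\<bar>) ss) \<le> K * (2 * k)"
      using 2 K0 by (rule mult_left_mono)
    then show ?thesis using 1 3 Kk2 unfolding D_def by linarith
  qed
  have B2: "F t n \<le> F u n + (K * S) * \<bar>t - u\<bar> * real n + D" for t u n
  proof -
    have 1: "F t n \<le> F u n + K * sum_list (map (\<lambda>s. real_of_int \<bar>\<lfloor>t * s * real n\<rfloor> - \<lfloor>u * s * real n\<rfloor>\<bar>) ss) + C0"
      unfolding F_def by (rule PPp(3))
    have "sum_list (map (\<lambda>s. real_of_int \<bar>\<lfloor>t * s * real n\<rfloor> - \<lfloor>u * s * real n\<rfloor>\<bar>) ss)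
        \<le> sum_list (map (\<lambda>s. \<bar>t - u\<bar> * real n * \<bar>s\<bar> + 1) ss)"
    proof (rule sum_list_mono)
      fix s
      have ee: "t * s * real n - u * s * real n = (t - u) * (real n * s)" by (simp add: algebra_simps)
      have "\<bar>t * s * real n - u * s * real n\<bar> = \<bar>t - u\<bar> * real n * \<bar>s\<bar>"
        unfolding ee by (simp add: abs_mult mult.assoc)
      then show "real_of_int \<bar>\<lfloor>t * s * real n\<rfloor> - \<lfloor>u * s * real n\<rfloor>\<bar> \<le> \<bar>t - u\<bar> * real n * \<bar>s\<bar> + 1"
        using fl2[of "t * s * real n" "u * s * real n"] by simp
    qed
    also have "\<dots> = \<bar>t - u\<bar> * real n * S + k"
      unfolding S_def k_def by (simp add: sum_list_addf sum_list_const_mult sum_list_ones)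
    finally have 2: "sum_list (map (\<lambda>s. real_of_int \<bar>\<lfloor>t * s * real n\<rfloor> - \<lfloor>u * s * real n\<rfloor>\<bar>) ss)
        \<le> \<bar>t - u\<bar> * real n * S + k" .
    have "K * sum_list (map (\<lambda>s. real_of_int \<bar>\<lfloor>t * s * real n\<rfloor> - \<lfloor>u * s * real n\<rfloor>\<bar>) ss)
        \<le> K * (\<bar>t - u\<bar> * real n * S + k)" using 2 K0 by (rule mult_left_mono)
    also have "\<dots> = (K * S) * \<bar>t - u\<bar> * real n + K * k" by (simp add: algebra_simps)
    finally show ?thesis using 1 C0 Kk unfolding D_def by linarith
  qed
  have B3: "F (-t) n \<le> F t n + D" for t n
  proof -
    have 1: "F (-t) n \<le> \<nu> (PP G gs ss (\<lambda>s. - \<lfloor>t * s * real n\<rfloor>))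
       + K * sum_list (map (\<lambda>s. real_of_int \<bar>\<lfloor>(-t) * s * real n\<rfloor> - (- \<lfloor>t * s * real n\<rfloor>)\<bar>) ss) + C0"
      unfolding F_def by (rule PPp(3))
    have 2: "sum_list (map (\<lambda>s. real_of_int \<bar>\<lfloor>(-t) * s * real n\<rfloor> - (- \<lfloor>t * s * real n\<rfloor>)\<bar>) ss) \<le> 2 * k"
      unfolding k_def
    proof (rule sum_list_le_const)
      fix s show "real_of_int \<bar>\<lfloor>(-t) * s * real n\<rfloor> - (- \<lfloor>t * s * real n\<rfloor>)\<bar> \<le> 2"
        using fl3[of "t * s * real n"] by simp
    qed
    have 3: "\<nu> (PP G gs ss (\<lambda>s. - \<lfloor>t * s * real n\<rfloor>)) \<le> F t n + C0"
      unfolding F_def by (rule PPp(2))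
    have "K * sum_list (map (\<lambda>s. real_of_int \<bar>\<lfloor>(-t) * s * real n\<rfloor> - (- \<lfloor>t * s * real n\<rfloor>)\<bar>) ss) \<le> K * (2 * k)"
      using 2 K0 by (rule mult_left_mono)
    then show ?thesis using 1 3 C0 Kk2 unfolding D_def by linarith
  qed
  have B4: "0 \<le> F t n" for t n unfolding F_def using gs by (intro nu_nonneg) simp
  have B5: "F (real a / real q) (q * n) = F 1 (a * n)" if q: "0 < q" for a q n
  proof -
    have "(\<lambda>s. \<lfloor>real a / real q * s * real (q * n)\<rfloor>) = (\<lambda>s. \<lfloor>1 * s * real (a * n)\<rfloor>)"
      using q by (auto simp: field_simps)
    then show ?thesis unfolding F_def by simp
  qed
  have KS0: "K * S \<ge> 0" using K0 S0 by simp
  obtain L where L1: "(\<lambda>n. F 1 n / real n) \<longlonglongrightarrow> L" and L2: "(\<lambda>n. F lam n / real n) \<longlonglongrightarrow> \<bar>lam\<bar> * L"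
    using scaling[of F D "K * S" D lam, OF B1 B2 B3 B4 B5 D0 KS0] by blast
  have e1: "F 1 n = \<nu> (gprod G (map2 (\<lambda>g s. g [^]\<^bsub>G\<^esub> \<lfloor>s * real n\<rfloor>) gs ss))" for n
    unfolding F_def PP_def by simp
  have e2: "F lam n = \<nu> (gprod G (map2 (\<lambda>g s. g [^]\<^bsub>G\<^esub> \<lfloor>lam * s * real n\<rfloor>) gs ss))" for n
    unfolding F_def PP_def by simp
  show ?thesis using L1 L2 unfolding e1 e2 by blast
qed

end
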